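(* The conditional logics $\mathsf{CKCEM}$ and $\mathsf{CKCEMID}$ have the uniform interpolation property (UIP), and hence Craig interpolation (CIP).
   Context: Formulas of $\mathcal{L}_\triangleright$: atoms, $\bot$, $\wedge,\vee,\to$, binary $\triangleright$; $\top:=\bot\to\bot$, $\neg A:=A\to\bot$. $\mathsf{CE}$ is the smallest set of formulas containing all instances of classical tautologies and closed under modus ponens and the rule: from $\phi_0\leftrightarrow\phi_1$ and $\psi_0\leftrightarrow\psi_1$ infer $(\phi_0\triangleright\psi_0)\to(\phi_1\triangleright\psi_1)$. Axiom schemes: (CM) $(\phi\triangleright\psi\wedge\theta)\to(\phi\triangleright\psi)\wedge(\phi\triangleright\theta)$; (CC) $(\phi\triangleright\psi)\wedge(\phi\triangleright\theta)\to(\phi\triangleright\psi\wedge\theta)$; (CN) $\phi\triangleright\top$; (CEM) $(\phi\triangleright\psi)\vee(\phi\triangleright\neg\psi)$; (ID) $\phi\triangleright\phi$. $\mathsf{CK}=\mathsf{CE}+(CM)+(CC)+(CN)$, $\mathsf{CKCEM}=\mathsf{CK}+(CEM)$, $\mathsf{CKCEMID}=\mathsf{CKCEM}+(ID)$. $V(\phi)$ is the set of atoms occurring in $\phi$; $\phi$ is $p$-free if $p\notin V(\phi)$. UIP for a logic $L$: for every formula $\phi$ and atom $p$ there are $p$-free formulas $\forall p\,\phi$, $\exists p\,\phi$ with $V(\cdot)\subseteq V(\phi)$ such that $L\vdash\forall p\,\phi\to\phi$; for every $p$-free $\psi$, $L\vdash\psi\to\phi$ implies $L\vdash\psi\to\forall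 p\,\phi$; $L\vdash\phi\to\exists p\,\phi$; for every $p$-free $\psi$, $L\vdash\phi\to\psi$ implies $L\vdash\exists p\,\phi\to\psi$. CIP: whenever $L\vdash\phi\to\psi$ there is $\theta$ with $V(\theta)\subseteq V(\phi)\cap V(\psi)$, $L\vdash\phi\to\theta$, $L\vdash\theta\to\psi$. *)

theory Defs
  imports Main
begin

datatype fm = Atom nat | Bot | And fm fm | Or fm fm | Imp fm fm | Cond fm fm

definition Top :: fm where "Top = Imp Bot Bot"
definition Neg :: "fm \<Rightarrow> fm" where "Neg A = Imp A Bot"
definition Iff :: "fm \<Rightarrow> fm \<Rightarrow> fm" where "Iff A B = And (Imp A B) (Imp B A)"

primrec vars :: "fm \<Rightarrow> nat set" where
  "vars (Atom p) = {p}"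
| "vars Bot = {}"
| "vars (And A B) = vars A \<union> vars B"
| "vars (Or A B) = vars A \<union> vars B"
| "vars (Imp A B) = vars A \<union> vars B"
| "vars (Cond A B) = vars A \<union> vars B"

text \<open>Classical evaluation, treating atoms and conditional formulas as
propositional letters.  A formula is an instance of a classical tautology
iff it is true under every such valuation.\<close>
primrec peval :: "(fm \<Rightarrow> bool) \<Rightarrow> fm \<Rightarrow> bool" where
  "peval v (Atom p) = v (Atom p)"
| "peval v Bot = False"
| "peval v (And A B) = (peval v A \<and> peval v B)"
| "peval v (Or A B) = (peval v A \<or> peval v B)"
| "peval v (Imp A B) = (peval v A \<longrightarrow> peval v B)"
| "peval v (Cond A B) = v (Cond A B)"

definition taut :: "fm \<Rightarrow> bool" where "taut A = (\<forall>v. peval v A)"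

inductive_set CEplus :: "fm set \<Rightarrow> fm set" for Ax :: "fm set" where
  tautI: "taut A \<Longrightarrow> A \<in> CEplus Ax"
| axI: "A \<in> Ax \<Longrightarrow> A \<in> CEplus Ax"
| mp: "Imp A B \<in> CEplus Ax \<Longrightarrow> A \<in> CEplus Ax \<Longrightarrow> B \<in> CEplus Ax"
| rce: "Iff A0 A1 \<in> CEplus Ax \<Longrightarrow> Iff B0 B1 \<in> CEplus Ax \<Longrightarrow>
        Imp (Cond A0 B0) (Cond A1 B1) \<in> CEplus Ax"

definition CE :: "fm set" where "CE = CEplus {}"

definition axCM :: "fm set" where
  "axCM = {Imp (Cond A (And B C)) (And (Cond A B) (Cond A C)) | A B C. True}"
definition axCC :: "fm set" where
  "axCC = {Imp (And (Cond A B) (Cond A C)) (Cond A (And B C)) | A B C. True}"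
definition axCN :: "fm set" where
  "axCN = {Cond A Top | A. True}"
definition axCEM :: "fm set" where
  "axCEM = {Or (Cond A B) (Cond A (Neg B)) | A B. True}"
definition axID :: "fm set" where
  "axID = {Cond A A | A. True}"

definition CK :: "fm set" where "CK = CEplus (axCM \<union> axCC \<union> axCN)"
definition CKCEM :: "fm set" where "CKCEM = CEplus (axCM \<union> axCC \<union> axCN \<union> axCEM)"
definition CKCEMID :: "fm set" where
  "CKCEMID = CEplus (axCM \<union> axCC \<union> axCN \<union> axCEM \<union> axID)"

definition UIP :: "fm set \<Rightarrow> bool" where
  "UIP L = (\<forall>\<phi> p. \<exists>Ap Ep.
      p \<notin> vars Ap \<and> vars Ap \<subseteq> vars \<phi> \<and>
      p \<notin> vars Ep \<and> vars Ep \<subseteq> vars \<phi> \<and>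
      Imp Ap \<phi> \<in> L \<and>
      (\<forall>\<psi>. p \<notin> vars \<psi> \<longrightarrow> Imp \<psi> \<phi> \<in> L \<longrightarrow> Imp \<psi> Ap \<in> L) \<and>
      Imp \<phi> Ep \<in> L \<and>
      (\<forall>\<psi>. p \<notin> vars \<psi> \<longrightarrow> Imp \<phi> \<psi> \<in> L \<longrightarrow> Imp Ep \<psi> \<in> L))"

definition CIP :: "fm set \<Rightarrow> bool" where
  "CIP L = (\<forall>\<phi> \<psi>. Imp \<phi> \<psi> \<in> L \<longrightarrow>
      (\<exists>\<theta>. vars \<theta> \<subseteq> vars \<phi> \<inter> vars \<psi> \<and> Imp \<phi> \<theta> \<in> L \<and> Imp \<theta> \<psi> \<in> L))"

end

theory Submission
  imports Defs
begin

definition conj :: "fm list \<Rightarrow> fm" where "conj xs = foldr And xs Top"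
definition disj :: "fm list \<Rightarrow> fm" where "disj xs = foldr Or xs Bot"

lemma peval_Top[simp]: "peval v Top" by (simp add: Top_def)
lemma peval_Neg[simp]: "peval v (Neg A) = (\<not> peval v A)" by (simp add: Neg_def)
lemma peval_Iff[simp]: "peval v (Iff A B) = (peval v A = peval v B)" by (auto simp add: Iff_def)
lemma peval_conj[simp]: "peval v (conj xs) = (\<forall>x\<in>set xs. peval v x)"
  by (induct xs) (auto simp: conj_def)
lemma peval_disj[simp]: "peval v (disj xs) = (\<exists>x\<in>set xs. peval v x)"
  by (induct xs) (auto simp: disj_def)
lemma peval_foldr_Imp: "peval v (foldr Imp hs C) = ((\<forall>h\<in>set hs. peval v h) \<longrightarrow> peval v C)"
  by (induct hs) auto

lemma vars_Top[simp]: "vars Top = {}" by (simp add: Top_def)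
lemma vars_Neg[simp]: "vars (Neg A) = vars A" by (simp add: Neg_def)
lemma vars_conj[simp]: "vars (conj xs) = (\<Union>x\<in>set xs. vars x)"
  by (induct xs) (auto simp: conj_def)
lemma vars_disj[simp]: "vars (disj xs) = (\<Union>x\<in>set xs. vars x)"
  by (induct xs) (auto simp: disj_def)

lemma foldr_Imp_mp: "foldr Imp hs C \<in> CEplus Ax \<Longrightarrow> set hs \<subseteq> CEplus Ax \<Longrightarrow> C \<in> CEplus Ax"
  by (induct hs) (auto intro: CEplus.mp)

lemma L_prop:
  assumes "\<And>v. (\<forall>h\<in>set hs. peval v h) \<Longrightarrow> peval v C" "set hs \<subseteq> CEplus Ax"
  shows "C \<in> CEplus Ax"
proof -
  have "taut (foldr Imp hs C)" using assms(1) by (auto simp: taut_def peval_foldr_Imp)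
  then show ?thesis using assms(2) by (intro foldr_Imp_mp[of hs C]) (auto intro: CEplus.tautI)
qed

lemma L_prop1: "(\<And>v. peval v A \<Longrightarrow> peval v C) \<Longrightarrow> A \<in> CEplus Ax \<Longrightarrow> C \<in> CEplus Ax"
  using L_prop[of "[A]" C Ax] by auto
lemma L_prop2: "(\<And>v. peval v A \<Longrightarrow> peval v B \<Longrightarrow> peval v C) \<Longrightarrow> A \<in> CEplus Ax \<Longrightarrow> B \<in> CEplus Ax \<Longrightarrow> C \<in> CEplus Ax"
  using L_prop[of "[A,B]" C Ax] by auto
lemma L_prop3: "(\<And>v. peval v A \<Longrightarrow> peval v B \<Longrightarrow> peval v D \<Longrightarrow> peval v C) \<Longrightarrow> A \<in> CEplus Ax \<Longrightarrow> B \<in> CEplus Ax \<Longrightarrow> D \<in> CEplus Ax \<Longrightarrow> C \<in> CEplus Ax"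
  using L_prop[of "[A,B,D]" C Ax] by auto
lemma L_taut: "(\<And>v. peval v C) \<Longrightarrow> C \<in> CEplus Ax"
  using L_prop[of "[]" C Ax] by auto

definition der :: "fm set \<Rightarrow> fm set \<Rightarrow> fm \<Rightarrow> bool" where
  "der Ax T A = (\<exists>hs. set hs \<subseteq> T \<and> Imp (conj hs) A \<in> CEplus Ax)"

lemma der_prop:
  assumes "\<And>v. (\<forall>h\<in>set hs. peval v h) \<Longrightarrow> peval v C" "\<forall>h\<in>set hs. der Ax T h"
  shows "der Ax T C"
  using assms
proof (induct hs arbitrary: C)
  case Nil
  then show ?case unfolding der_def
    by (intro exI[of _ "[]"]) (auto intro: L_taut)
next
  case (Cons h hs)
  from Cons.prems(2) obtain ks where ks: "set ks \<subseteq> T" "Imp (conj ks) h \<in> CEplus Ax"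
    by (auto simp: der_def)
  have "der Ax T (Imp h C)" using Cons by (intro Cons.hyps) auto
  then obtain ls where ls: "set ls \<subseteq> T" "Imp (conj ls) (Imp h C) \<in> CEplus Ax"
    by (auto simp: der_def)
  have "Imp (conj (ks @ ls)) C \<in> CEplus Ax"
    by (rule L_prop2[OF _ ks(2) ls(2)]) auto
  then show ?case using ks ls unfolding der_def by (intro exI[of _ "ks @ ls"]) auto
qed

lemma der_prop1: "(\<And>v. peval v A \<Longrightarrow> peval v C) \<Longrightarrow> der Ax T A \<Longrightarrow> der Ax T C"
  using der_prop[of "[A]" C Ax T] by auto
lemma der_prop2: "(\<And>v. peval v A \<Longrightarrow> peval v B \<Longrightarrow> peval v C) \<Longrightarrow> der Ax T A \<Longrightarrow> der Ax T B \<Longrightarrow> der Ax T C"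
  using der_prop[of "[A,B]" C Ax T] by auto

lemma der_mem: "A \<in> T \<Longrightarrow> der Ax T A"
  unfolding der_def by (intro exI[of _ "[A]"]) (auto intro: L_taut)
lemma der_L: "A \<in> CEplus Ax \<Longrightarrow> der Ax T A"
  unfolding der_def by (intro exI[of _ "[]"]) (auto intro: L_prop1)
lemma der_mono: "der Ax T A \<Longrightarrow> T \<subseteq> T' \<Longrightarrow> der Ax T' A"
  unfolding der_def by blast
lemma der_deduct: "der Ax (insert A T) B \<Longrightarrow> der Ax T (Imp A B)"
proof -
  assume "der Ax (insert A T) B"
  then obtain hs where hs: "set hs \<subseteq> insert A T" "Imp (conj hs) B \<in> CEplus Ax" by (auto simp: der_def)
  have "Imp (conj (filter (\<lambda>x. x \<noteq> A) hs)) (Imp A B) \<in> CEplus Ax"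
    by (rule L_prop1[OF _ hs(2)]) auto
  then show ?thesis using hs unfolding der_def by (intro exI[of _ "filter (\<lambda>x. x \<noteq> A) hs"]) auto
qed
lemma der_empty: "der Ax {} A = (A \<in> CEplus Ax)"
  unfolding der_def conj_def apply auto
  apply (erule L_prop1[rotated]) apply simp
  apply (erule L_prop1[rotated]) apply simp
  done


primrec cdepth :: "fm \<Rightarrow> nat" where
  "cdepth (Atom p) = 0"
| "cdepth Bot = 0"
| "cdepth (And A B) = max (cdepth A) (cdepth B)"
| "cdepth (Or A B) = max (cdepth A) (cdepth B)"
| "cdepth (Imp A B) = max (cdepth A) (cdepth B)"
| "cdepth (Cond A B) = Suc (max (cdepth A) (cdepth B))"

lemma cdepth_Top[simp]: "cdepth Top = 0" by (simp add: Top_def)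
lemma cdepth_Neg[simp]: "cdepth (Neg A) = cdepth A" by (simp add: Neg_def)

locale clogic =
  fixes Ax :: "fm set" and b :: bool
  assumes Ax_eq: "Ax = axCM \<union> axCC \<union> axCN \<union> axCEM \<union> (if b then axID else {})"
begin

abbreviation L where "L \<equiv> CEplus Ax"

lemma ax_CM: "Imp (Cond A (And B C)) (And (Cond A B) (Cond A C)) \<in> L"
  by (rule CEplus.axI) (auto simp: Ax_eq axCM_def)
lemma ax_CC: "Imp (And (Cond A B) (Cond A C)) (Cond A (And B C)) \<in> L"
  by (rule CEplus.axI) (auto simp: Ax_eq axCC_def)
lemma ax_CN: "Cond A Top \<in> L"
  by (rule CEplus.axI) (auto simp: Ax_eq axCN_def)
lemma ax_CEM: "Or (Cond A B) (Cond A (Neg B)) \<in> L"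
  by (rule CEplus.axI) (auto simp: Ax_eq axCEM_def)
lemma ax_ID: "b \<Longrightarrow> Cond A A \<in> L"
  by (rule CEplus.axI) (auto simp: Ax_eq axID_def)

lemma cond_congA: "Imp A A' \<in> L \<Longrightarrow> Imp A' A \<in> L \<Longrightarrow> Imp (Cond A B) (Cond A' B) \<in> L"
proof -
  assume a: "Imp A A' \<in> L" "Imp A' A \<in> L"
  have "Iff A A' \<in> L" by (rule L_prop2[OF _ a]) auto
  moreover have "Iff B B \<in> L" by (rule L_taut) auto
  ultimately show ?thesis by (rule CEplus.rce)
qed

lemma cond_mono: "Imp B B' \<in> L \<Longrightarrow> Imp (Cond A B) (Cond A B') \<in> L"
proof -
  assume a: "Imp B B' \<in> L"
  have "Iff B (And B B') \<in> L" by (rule L_prop1[OF _ a]) auto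
  moreover have "Iff A A \<in> L" by (rule L_taut) auto
  ultimately have x: "Imp (Cond A B) (Cond A (And B B')) \<in> L" by (intro CEplus.rce)
  have c: "Imp (Cond A (And B B')) (And (Cond A B) (Cond A B')) \<in> L" by (rule ax_CM)
  show ?thesis by (rule L_prop2[OF _ x c]) auto
qed

definition cons :: "fm set \<Rightarrow> bool" where "cons T = (\<not> der Ax T Bot)"
definition mcs :: "fm set \<Rightarrow> bool" where "mcs G = (cons G \<and> (\<forall>A. A \<in> G \<or> Neg A \<in> G))"

lemma mcs_der: "mcs G \<Longrightarrow> der Ax G A \<Longrightarrow> A \<in> G"
proof (rule ccontr)
  assume m: "mcs G" and d: "der Ax G A" and n: "A \<notin> G"
  then have "Neg A \<in> G" by (auto simp: mcs_def)
  then have "der Ax G Bot" by (intro der_prop2[OF _ d der_mem]) auto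
  then show False using m by (auto simp: mcs_def cons_def)
qed

lemma mcs_L: "mcs G \<Longrightarrow> A \<in> L \<Longrightarrow> A \<in> G"
  by (rule mcs_der) (auto intro: der_L)

lemma mcs_Bot: "mcs G \<Longrightarrow> Bot \<notin> G"
  by (auto simp: mcs_def cons_def dest: der_mem)

lemma mcs_cl: "mcs G \<Longrightarrow> set hs \<subseteq> G \<Longrightarrow> (\<And>v. (\<forall>h\<in>set hs. peval v h) \<Longrightarrow> peval v C) \<Longrightarrow> C \<in> G"
  by (rule mcs_der, assumption, rule der_prop[of hs]) (auto intro: der_mem)

lemma mcs_neg: "mcs G \<Longrightarrow> (Neg A \<in> G) = (A \<notin> G)"
  using mcs_cl[of G "[A, Neg A]" Bot] mcs_Bot by (auto simp: mcs_def)

lemma mcs_And: "mcs G \<Longrightarrow> (And A B \<in> G) = (A \<in> G \<and> B \<in> G)"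
proof -
  assume m: "mcs G"
  have 1: "A \<in> G \<Longrightarrow> B \<in> G \<Longrightarrow> And A B \<in> G" by (rule mcs_cl[OF m, of "[A, B]"]) auto
  have 2: "And A B \<in> G \<Longrightarrow> A \<in> G" by (rule mcs_cl[OF m, of "[And A B]"]) auto
  have 3: "And A B \<in> G \<Longrightarrow> B \<in> G" by (rule mcs_cl[OF m, of "[And A B]"]) auto
  show ?thesis using 1 2 3 by blast
qed
lemma mcs_Or: "mcs G \<Longrightarrow> (Or A B \<in> G) = (A \<in> G \<or> B \<in> G)"
proof -
  assume m: "mcs G"
  have 1: "A \<in> G \<Longrightarrow> Or A B \<in> G" by (rule mcs_cl[OF m, of "[A]"]) auto
  have 2: "B \<in> G \<Longrightarrow> Or A B \<in> G" by (rule mcs_cl[OF m, of "[B]"]) auto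
  have 3: "Or A B \<in> G \<Longrightarrow> Neg A \<in> G \<Longrightarrow> Neg B \<in> G \<Longrightarrow> Bot \<in> G"
    by (rule mcs_cl[OF m, of "[Or A B, Neg A, Neg B]"]) auto
  show ?thesis using 1 2 3 mcs_Bot[OF m] mcs_neg[OF m, of A] mcs_neg[OF m, of B] by blast
qed
lemma mcs_Imp: "mcs G \<Longrightarrow> (Imp A B \<in> G) = (A \<in> G \<longrightarrow> B \<in> G)"
proof -
  assume m: "mcs G"
  have 1: "Neg A \<in> G \<Longrightarrow> Imp A B \<in> G" by (rule mcs_cl[OF m, of "[Neg A]"]) auto
  have 2: "B \<in> G \<Longrightarrow> Imp A B \<in> G" by (rule mcs_cl[OF m, of "[B]"]) auto
  have 3: "Imp A B \<in> G \<Longrightarrow> A \<in> G \<Longrightarrow> B \<in> G" by (rule mcs_cl[OF m, of "[Imp A B, A]"]) auto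
  show ?thesis using 1 2 3 mcs_neg[OF m, of A] by blast
qed

lemma mcs_peval: "mcs G \<Longrightarrow> peval (\<lambda>x. x \<in> G) A = (A \<in> G)"
  by (induct A) (auto simp: mcs_And mcs_Or mcs_Imp mcs_Bot)

lemma mcs_mp: "mcs G \<Longrightarrow> Imp A B \<in> L \<Longrightarrow> A \<in> G \<Longrightarrow> B \<in> G"
  using mcs_L[of G "Imp A B"] mcs_Imp[of G A B] by auto

lemma mcs_conj: "mcs G \<Longrightarrow> (conj xs \<in> G) = (\<forall>x\<in>set xs. x \<in> G)"
  using mcs_peval[of G "conj xs"] mcs_peval[of G] by auto
lemma mcs_disj: "mcs G \<Longrightarrow> (disj xs \<in> G) = (\<exists>x\<in>set xs. x \<in> G)"
  using mcs_peval[of G "disj xs"] mcs_peval[of G] by auto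


definition insep :: "nat set \<Rightarrow> nat \<Rightarrow> fm set \<Rightarrow> fm set \<Rightarrow> bool" where
  "insep V0 n T1 T2 = (\<not> (\<exists>\<theta>. vars \<theta> \<subseteq> V0 \<and> cdepth \<theta> \<le> n \<and> der Ax T1 \<theta> \<and> der Ax T2 (Neg \<theta>)))"

lemma insep_mono: "insep V0 n T1 T2 \<Longrightarrow> S1 \<subseteq> T1 \<Longrightarrow> S2 \<subseteq> T2 \<Longrightarrow> insep V0 n S1 S2"
  unfolding insep_def by (meson der_mono)

lemma extend:
  assumes ins: "insep V0 n T1 T2"
  shows "\<exists>G1 G2. T1 \<subseteq> G1 \<and> T2 \<subseteq> G2 \<and> mcs G1 \<and> mcs G2 \<and>
     (\<forall>\<theta>. vars \<theta> \<subseteq> V0 \<longrightarrow> cdepth \<theta> \<le> n \<longrightarrow> (\<theta> \<in> G1 \<longleftrightarrow> \<theta> \<in> G2))"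
proof -
  define lft :: "(bool \<times> fm) set \<Rightarrow> fm set" where "lft S = {A. (True, A) \<in> S}" for S
  define rgt :: "(bool \<times> fm) set \<Rightarrow> fm set" where "rgt S = {A. (False, A) \<in> S}" for S
  define AA where "AA = {S. insep V0 n (lft S) (rgt S) \<and> T1 \<subseteq> lft S \<and> T2 \<subseteq> rgt S}"
  define S0 where "S0 = Pair True ` T1 \<union> Pair False ` T2"
  have "S0 \<in> AA" using ins by (auto simp: AA_def S0_def lft_def rgt_def image_iff)
  then have ne: "AA \<noteq> {}" by blast
  have ch: "\<Union>C \<in> AA" if C: "C \<noteq> {}" "subset.chain AA C" for C
  proof -
    from C obtain S where S: "S \<in> C" by blast
    have CA: "C \<subseteq> AA" using C by (auto simp: subset.chain_def)
    have t: "T1 \<subseteq> lft (\<Union>C)" "T2 \<subseteq> rgt (\<Union>C)" using S CA by (auto simp: AA_def lft_def rgt_def)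
    have "insep V0 n (lft (\<Union>C)) (rgt (\<Union>C))"
    proof (rule ccontr)
      assume "\<not> insep V0 n (lft (\<Union>C)) (rgt (\<Union>C))"
      then obtain \<theta> hs1 hs2 where th: "vars \<theta> \<subseteq> V0" "cdepth \<theta> \<le> n"
        and h1: "set hs1 \<subseteq> lft (\<Union>C)" "Imp (conj hs1) \<theta> \<in> L"
        and h2: "set hs2 \<subseteq> rgt (\<Union>C)" "Imp (conj hs2) (Neg \<theta>) \<in> L"
        by (auto simp: insep_def der_def)
      have "finite (Pair True ` set hs1 \<union> Pair False ` set hs2)" by auto
      moreover have "Pair True ` set hs1 \<union> Pair False ` set hs2 \<subseteq> \<Union>C"
        using h1(1) h2(1) by (auto simp: lft_def rgt_def)
      ultimately obtain S' where S': "S' \<in> C" "Pair True ` set hs1 \<union> Pair False ` set hs2 \<subseteq> S'"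
        using finite_subset_Union_chain[OF _ _ C(1) C(2)] by metis
      then have "set hs1 \<subseteq> lft S'" "set hs2 \<subseteq> rgt S'" by (auto simp: lft_def rgt_def)
      then have "der Ax (lft S') \<theta>" "der Ax (rgt S') (Neg \<theta>)" using h1 h2 by (auto simp: der_def)
      moreover have "insep V0 n (lft S') (rgt S')" using S' CA by (auto simp: AA_def)
      ultimately show False using th by (auto simp: insep_def)
    qed
    then show ?thesis using t by (auto simp: AA_def)
  qed
  obtain M where M: "M \<in> AA" and max: "\<And>X. X \<in> AA \<Longrightarrow> M \<subseteq> X \<Longrightarrow> X = M"
    using subset_Zorn_nonempty[OF ne ch] by blast
  define G1 where "G1 = lft M"
  define G2 where "G2 = rgt M"
  have insM: "insep V0 n G1 G2" and tt: "T1 \<subseteq> G1" "T2 \<subseteq> G2" using M by (auto simp: AA_def G1_def G2_def)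
  have max1: "\<not> insep V0 n (insert A G1) G2" if "A \<notin> G1" for A
  proof
    assume i: "insep V0 n (insert A G1) G2"
    have "lft (insert (True, A) M) = insert A G1" "rgt (insert (True, A) M) = G2"
      by (auto simp: lft_def rgt_def G1_def G2_def)
    then have "insert (True, A) M \<in> AA" using i tt by (auto simp: AA_def)
    then have "insert (True, A) M = M" by (rule max) auto
    then show False using that by (auto simp: G1_def lft_def)
  qed
  have max2: "\<not> insep V0 n G1 (insert A G2)" if "A \<notin> G2" for A
  proof
    assume i: "insep V0 n G1 (insert A G2)"
    have "lft (insert (False, A) M) = G1" "rgt (insert (False, A) M) = insert A G2"
      by (auto simp: lft_def rgt_def G1_def G2_def)
    then have "insert (False, A) M \<in> AA" using i tt by (auto simp: AA_def)
    then have "insert (False, A) M = M" by (rule max) auto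
    then show False using that by (auto simp: G2_def rgt_def)
  qed
  have c1: "cons G1"
  proof (rule ccontr)
    assume "\<not> cons G1"
    then have "der Ax G1 Bot" by (simp add: cons_def)
    moreover have "der Ax G2 (Neg Bot)" by (rule der_L, rule L_taut) simp
    ultimately show False using insM by (auto simp: insep_def)
  qed
  have c2: "cons G2"
  proof (rule ccontr)
    assume "\<not> cons G2"
    then have "der Ax G2 Bot" by (simp add: cons_def)
    then have "der Ax G2 (Neg Top)" by (rule der_prop1[rotated]) auto
    moreover have "der Ax G1 Top" by (rule der_L, rule L_taut) simp
    ultimately show False using insM unfolding insep_def by (metis cdepth_Top empty_subsetI le0 vars_Top)
  qed
  have m1: "mcs G1"
  proof -
    have "A \<in> G1 \<or> Neg A \<in> G1" for A
    proof (rule ccontr)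
      assume "\<not> (A \<in> G1 \<or> Neg A \<in> G1)"
      then have "\<not> insep V0 n (insert A G1) G2" "\<not> insep V0 n (insert (Neg A) G1) G2"
        using max1 by auto
      then obtain t1 t2 where t: "vars t1 \<subseteq> V0" "cdepth t1 \<le> n" "der Ax (insert A G1) t1" "der Ax G2 (Neg t1)"
        "vars t2 \<subseteq> V0" "cdepth t2 \<le> n" "der Ax (insert (Neg A) G1) t2" "der Ax G2 (Neg t2)"
        unfolding insep_def by blast
      have "der Ax G1 (Or t1 t2)"
        by (rule der_prop2[OF _ der_deduct[OF t(3)] der_deduct[OF t(7)]]) auto
      moreover have "der Ax G2 (Neg (Or t1 t2))"
        by (rule der_prop2[OF _ t(4) t(8)]) auto
      ultimately show False using insM t unfolding insep_def
        by (metis Un_least cdepth.simps(4) max.bounded_iff vars.simps(4))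
    qed
    then show ?thesis using c1 by (simp add: mcs_def)
  qed
  have m2: "mcs G2"
  proof -
    have "A \<in> G2 \<or> Neg A \<in> G2" for A
    proof (rule ccontr)
      assume "\<not> (A \<in> G2 \<or> Neg A \<in> G2)"
      then have "\<not> insep V0 n G1 (insert A G2)" "\<not> insep V0 n G1 (insert (Neg A) G2)"
        using max2 by auto
      then obtain t1 t2 where t: "vars t1 \<subseteq> V0" "cdepth t1 \<le> n" "der Ax G1 t1" "der Ax (insert A G2) (Neg t1)"
        "vars t2 \<subseteq> V0" "cdepth t2 \<le> n" "der Ax G1 t2" "der Ax (insert (Neg A) G2) (Neg t2)"
        unfolding insep_def by blast
      have "der Ax G1 (And t1 t2)"
        by (rule der_prop2[OF _ t(3) t(7)]) auto
      moreover have "der Ax G2 (Neg (And t1 t2))"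
        by (rule der_prop2[OF _ der_deduct[OF t(4)] der_deduct[OF t(8)]]) auto
      ultimately show False using insM t unfolding insep_def
        by (metis Un_least cdepth.simps(3) max.bounded_iff vars.simps(3))
    qed
    then show ?thesis using c2 by (simp add: mcs_def)
  qed
  have agree: "\<theta> \<in> G1 \<longleftrightarrow> \<theta> \<in> G2" if "vars \<theta> \<subseteq> V0" "cdepth \<theta> \<le> n" for \<theta>
  proof
    assume a: "\<theta> \<in> G1"
    show "\<theta> \<in> G2"
    proof (rule ccontr)
      assume "\<theta> \<notin> G2"
      then have "Neg \<theta> \<in> G2" using m2 by (simp add: mcs_neg)
      then show False using insM a that unfolding insep_def by (meson der_mem)
    qed
  next
    assume a: "\<theta> \<in> G2"
    show "\<theta> \<in> G1"
    proof (rule ccontr)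
      assume "\<theta> \<notin> G1"
      then have "Neg \<theta> \<in> G1" using m1 by (simp add: mcs_neg)
      moreover have "der Ax G2 (Neg (Neg \<theta>))" using a by (auto intro: der_prop1 der_mem)
      ultimately show False using insM that unfolding insep_def
        by (metis cdepth_Neg der_mem vars_Neg)
    qed
  qed
  show ?thesis using tt m1 m2 agree by blast
qed

end

section \<open>Semantics\<close>

fun sat :: "('w \<Rightarrow> 'w set \<Rightarrow> 'w set) \<Rightarrow> ('w \<Rightarrow> nat \<Rightarrow> bool) \<Rightarrow> 'w \<Rightarrow> fm \<Rightarrow> bool" where
  "sat f V w (Atom p) = V w p"
| "sat f V w Bot = False"
| "sat f V w (And A B) = (sat f V w A \<and> sat f V w B)"
| "sat f V w (Or A B) = (sat f V w A \<or> sat f V w B)"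
| "sat f V w (Imp A B) = (sat f V w A \<longrightarrow> sat f V w B)"
| "sat f V w (Cond A B) = (\<forall>u\<in>f w {x. sat f V x A}. sat f V u B)"

lemma sat_peval: "sat f V w A = peval (\<lambda>x. sat f V w x) A"
  by (induct A) auto

lemma sat_Top[simp]: "sat f V w Top" by (simp add: Top_def)
lemma sat_Neg[simp]: "sat f V w (Neg A) = (\<not> sat f V w A)" by (simp add: Neg_def)
lemma sat_Iff[simp]: "sat f V w (Iff A B) = (sat f V w A = sat f V w B)" by (auto simp: Iff_def)

context clogic
begin

lemma soundness:
  assumes fok: "\<And>w X u v. u \<in> f w X \<Longrightarrow> v \<in> f w X \<Longrightarrow> u = v"
    and iok: "b \<Longrightarrow> \<forall>w X. f w X \<subseteq> X"
    and A: "A \<in> L"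
  shows "sat f V w A"
  using A
proof (induct arbitrary: w)
  case (tautI A)
  then show ?case by (simp add: taut_def sat_peval[of f V w A])
next
  case (axI A)
  then show ?case
  proof (simp add: Ax_eq, elim disjE)
    assume "A \<in> axCM" then show ?thesis by (auto simp: axCM_def)
  next
    assume "A \<in> axCC" then show ?thesis by (auto simp: axCC_def)
  next
    assume "A \<in> axCN" then show ?thesis by (auto simp: axCN_def)
  next
    assume "A \<in> axCEM"
    then obtain C B where "A = Or (Cond C B) (Cond C (Neg B))" by (auto simp: axCEM_def)
    then show ?thesis using fok[of _ w "{x. sat f V x C}"] by auto
  next
    assume "A \<in> (if b then axID else {})"
    then have "b" "A \<in> axID" by (auto split: if_splits)
    then obtain C where C: "A = Cond C C" by (auto simp: axID_def)
    have "f w {x. sat f V x C} \<subseteq> {x. sat f V x C}" using iok \<open>b\<close> by blast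
    then show ?thesis using C by auto
  qed
next
  case (mp A B)
  then show ?case by auto
next
  case (rce A0 A1 B0 B1)
  then have "{x. sat f V x A0} = {x. sat f V x A1}" by auto
  then show ?case using rce by auto
qed

lemma cond_conj: "mcs G \<Longrightarrow> set hs \<subseteq> {B. Cond A B \<in> G} \<Longrightarrow> Cond A (conj hs) \<in> G"
proof (induct hs)
  case Nil then show ?case using mcs_L[OF _ ax_CN] by (simp add: conj_def)
next
  case (Cons h hs)
  then have "Cond A h \<in> G" "Cond A (conj hs) \<in> G" by auto
  then have "And (Cond A h) (Cond A (conj hs)) \<in> G" using Cons.prems by (simp add: mcs_And)
  then show ?case using mcs_mp[OF Cons.prems(1) ax_CC] by (simp add: conj_def)
qed

lemma cond_der: "mcs G \<Longrightarrow> der Ax {B. Cond A B \<in> G} C \<Longrightarrow> Cond A C \<in> G"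
proof -
  assume m: "mcs G" and "der Ax {B. Cond A B \<in> G} C"
  then obtain hs where hs: "set hs \<subseteq> {B. Cond A B \<in> G}" "Imp (conj hs) C \<in> L" by (auto simp: der_def)
  show ?thesis using mcs_mp[OF m cond_mono[OF hs(2)] cond_conj[OF m hs(1)]] .
qed

lemma cond_bot:
  assumes m: "mcs G" and a: "Cond A C \<in> G" "Cond A (Neg C) \<in> G"
  shows "Cond A D \<in> G"
proof (rule cond_der[OF m])
  have "der Ax {B. Cond A B \<in> G} C" "der Ax {B. Cond A B \<in> G} (Neg C)"
    using a by (auto intro: der_mem)
  then show "der Ax {B. Cond A B \<in> G} D" by (intro der_prop2[of C "Neg C" D]) auto
qed

lemma cond_cem: "mcs G \<Longrightarrow> Cond A B \<notin> G \<Longrightarrow> Cond A (Neg B) \<in> G"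
  using mcs_L[OF _ ax_CEM, of G A B] by (simp add: mcs_Or)

lemma cond_eqA: "mcs G \<Longrightarrow> Imp A A' \<in> L \<Longrightarrow> Imp A' A \<in> L \<Longrightarrow> (Cond A B \<in> G) = (Cond A' B \<in> G)"
  using cond_congA[of A A' B] cond_congA[of A' A B] mcs_mp by blast

lemma der_set: "der Ax (set xs) C \<Longrightarrow> Imp (conj xs) C \<in> L"
proof -
  assume "der Ax (set xs) C"
  then obtain hs where hs: "set hs \<subseteq> set xs" "Imp (conj hs) C \<in> L" by (auto simp: der_def)
  show ?thesis by (rule L_prop1[OF _ hs(2)]) (use hs(1) in fastforce)
qed

end

section \<open>The amalgamated pair model\<close>

locale pairmodel = clogic +
  fixes V1 V2 :: "nat set"
begin

abbreviation "V0 \<equiv> V1 \<inter> V2"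

definition W :: "(nat \<times> fm set \<times> fm set) set" where
  "W = {(n, G1, G2). mcs G1 \<and> mcs G2 \<and> (\<forall>\<theta>. vars \<theta> \<subseteq> V0 \<longrightarrow> cdepth \<theta> \<le> n \<longrightarrow> (\<theta> \<in> G1 \<longleftrightarrow> \<theta> \<in> G2))}"

definition H :: "nat \<Rightarrow> (nat \<times> fm set \<times> fm set) set" where
  "H m = {u \<in> W. m \<le> fst u}"

definition tau1 :: "fm \<Rightarrow> (nat \<times> fm set \<times> fm set) set" where "tau1 A = {u. A \<in> fst (snd u)}"
definition tau2 :: "fm \<Rightarrow> (nat \<times> fm set \<times> fm set) set" where "tau2 A = {u. A \<in> snd (snd u)}"

definition K1 where "K1 w X = {A. X \<inter> H (fst w - 1) = tau1 A \<inter> H (fst w - 1)}"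
definition K2 where "K2 w X = {A. cdepth A < fst w \<and> X \<inter> H (fst w - 1) = tau2 A \<inter> H (fst w - 1)}"
definition S1 where "S1 w X = {B. \<exists>A\<in>K1 w X. Cond A B \<in> fst (snd w)}"
definition S2 where "S2 w X = {B. cdepth B < fst w \<and> (\<exists>A\<in>K2 w X. Cond A B \<in> snd (snd w))}"
definition succs where "succs w X = {u \<in> W. fst u = fst w - 1 \<and> S1 w X \<subseteq> fst (snd u) \<and> S2 w X \<subseteq> snd (snd u)}"
definition fM where "fM w X = (if w \<in> W \<and> (K1 w X \<noteq> {} \<or> K2 w X \<noteq> {}) \<and> succs w X \<noteq> {}
   then {SOME u. u \<in> succs w X} else {})"
definition val where "val w p = (if p \<in> V1 then Atom p \<in> fst (snd w) else Atom p \<in> snd (snd w))"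

lemma W_mcs: "w \<in> W \<Longrightarrow> mcs (fst (snd w)) \<and> mcs (snd (snd w))"
  by (auto simp: W_def)
lemma W_agree: "w \<in> W \<Longrightarrow> vars \<theta> \<subseteq> V0 \<Longrightarrow> cdepth \<theta> \<le> fst w \<Longrightarrow> (\<theta> \<in> fst (snd w) \<longleftrightarrow> \<theta> \<in> snd (snd w))"
  by (auto simp: W_def)

lemma sep_world:
  assumes "insep V0 m T1 T2"
  shows "\<exists>u\<in>W. fst u = m \<and> T1 \<subseteq> fst (snd u) \<and> T2 \<subseteq> snd (snd u)"
proof -
  obtain G1 G2 where "T1 \<subseteq> G1" "T2 \<subseteq> G2" "mcs G1" "mcs G2"
    "\<forall>\<theta>. vars \<theta> \<subseteq> V0 \<longrightarrow> cdepth \<theta> \<le> m \<longrightarrow> (\<theta> \<in> G1 \<longleftrightarrow> \<theta> \<in> G2)"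
    using extend[OF assms] by blast
  then show ?thesis by (intro bexI[of _ "(m, G1, G2)"]) (auto simp: W_def)
qed

lemma eq1:
  assumes "tau1 A \<inter> H m = tau1 A' \<inter> H m"
  shows "Imp A A' \<in> L"
proof (rule ccontr)
  assume n: "Imp A A' \<notin> L"
  have "insep V0 m {A, Neg A'} {}"
  proof (rule ccontr)
    assume "\<not> insep V0 m {A, Neg A'} {}"
    then obtain t where t1: "der Ax {A, Neg A'} t" and t2: "der Ax {} (Neg t)" by (auto simp: insep_def)
    have t3: "der Ax {A, Neg A'} t" "der Ax {A, Neg A'} (Neg t)"
      using der_mono[OF t1, of "{A, Neg A'}"] der_mono[OF t2, of "{A, Neg A'}"] by auto
    have "der Ax {A, Neg A'} Bot" by (rule der_prop2[OF _ t3]) auto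
    then have "der Ax (set [A, Neg A']) Bot" by simp
    then have "Imp (conj [A, Neg A']) Bot \<in> L" by (rule der_set)
    then have "Imp A A' \<in> L" by (rule L_prop1[rotated]) (auto simp: conj_def)
    then show False using n by simp
  qed
  from sep_world[OF this] obtain u where u: "u \<in> W" "fst u = m" "A \<in> fst (snd u)" "Neg A' \<in> fst (snd u)"
    by auto
  have "u \<in> tau1 A \<inter> H m" using u by (simp add: tau1_def H_def)
  then have "u \<in> tau1 A'" using assms by blast
  then show False using u(4) W_mcs[OF u(1)] mcs_neg by (auto simp: tau1_def)
qed

lemma eq2:
  assumes "tau2 A \<inter> H m = tau2 A' \<inter> H m"
  shows "Imp A A' \<in> L"
proof (rule ccontr)
  assume n: "Imp A A' \<notin> L"
  have "insep V0 m {} {A, Neg A'}"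
  proof (rule ccontr)
    assume "\<not> insep V0 m {} {A, Neg A'}"
    then obtain t where t1: "der Ax {} t" and t2: "der Ax {A, Neg A'} (Neg t)" by (auto simp: insep_def)
    have t3: "der Ax {A, Neg A'} t" "der Ax {A, Neg A'} (Neg t)"
      using der_mono[OF t1, of "{A, Neg A'}"] der_mono[OF t2, of "{A, Neg A'}"] by auto
    have "der Ax {A, Neg A'} Bot" by (rule der_prop2[OF _ t3]) auto
    then have "der Ax (set [A, Neg A']) Bot" by simp
    then have "Imp (conj [A, Neg A']) Bot \<in> L" by (rule der_set)
    then have "Imp A A' \<in> L" by (rule L_prop1[rotated]) (auto simp: conj_def)
    then show False using n by simp
  qed
  from sep_world[OF this] obtain u where u: "u \<in> W" "fst u = m" "A \<in> snd (snd u)" "Neg A' \<in> snd (snd u)"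
    by auto
  have "u \<in> tau2 A \<inter> H m" using u by (simp add: tau2_def H_def)
  then have "u \<in> tau2 A'" using assms by blast
  then show False using u(4) W_mcs[OF u(1)] mcs_neg by (auto simp: tau2_def)
qed

lemma eq12:
  assumes "tau1 A \<inter> H m = tau2 A' \<inter> H m"
  shows "\<exists>C. vars C \<subseteq> V0 \<and> cdepth C \<le> m \<and> Imp A C \<in> L \<and> Imp C A' \<in> L"
proof (rule ccontr)
  assume n: "\<not> ?thesis"
  have "insep V0 m {A} {Neg A'}"
  proof (rule ccontr)
    assume "\<not> insep V0 m {A} {Neg A'}"
    then obtain t where t: "vars t \<subseteq> V0" "cdepth t \<le> m" "der Ax {A} t" "der Ax {Neg A'} (Neg t)"
      by (auto simp: insep_def)
    have "der Ax (set [A]) t" "der Ax (set [Neg A']) (Neg t)" using t by simp_all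
    then have a: "Imp (conj [A]) t \<in> L" "Imp (conj [Neg A']) (Neg t) \<in> L" by (auto intro: der_set)
    have "Imp A t \<in> L" using a(1) by (rule L_prop1[rotated]) (simp add: conj_def)
    moreover have "Imp t A' \<in> L" using a(2) by (rule L_prop1[rotated]) (auto simp: conj_def)
    ultimately show False using n t by blast
  qed
  from sep_world[OF this] obtain u where u: "u \<in> W" "fst u = m" "A \<in> fst (snd u)" "Neg A' \<in> snd (snd u)"
    by auto
  have "u \<in> tau1 A \<inter> H m" using u by (simp add: tau1_def H_def)
  then have "u \<in> tau2 A'" using assms by blast
  then show False using u(4) W_mcs[OF u(1)] mcs_neg by (auto simp: tau2_def)
qed

lemma eq21:
  assumes "tau1 A \<inter> H m = tau2 A' \<inter> H m"
  shows "\<exists>C. vars C \<subseteq> V0 \<and> cdepth C \<le> m \<and> Imp A' C \<in> L \<and> Imp C A \<in> L"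
proof (rule ccontr)
  assume n: "\<not> ?thesis"
  have "insep V0 m {Neg A} {A'}"
  proof (rule ccontr)
    assume "\<not> insep V0 m {Neg A} {A'}"
    then obtain t where t: "vars t \<subseteq> V0" "cdepth t \<le> m" "der Ax {Neg A} t" "der Ax {A'} (Neg t)"
      by (auto simp: insep_def)
    have "der Ax (set [Neg A]) t" "der Ax (set [A']) (Neg t)" using t by simp_all
    then have a: "Imp (conj [Neg A]) t \<in> L" "Imp (conj [A']) (Neg t) \<in> L" by (auto intro: der_set)
    have "Imp A' (Neg t) \<in> L" using a(2) by (rule L_prop1[rotated]) (simp add: conj_def)
    moreover have "Imp (Neg t) A \<in> L" using a(1) by (rule L_prop1[rotated]) (auto simp: conj_def)
    ultimately have "Imp A' (Neg t) \<in> L" "Imp (Neg t) A \<in> L" by blast+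
    then show False using n t by (metis cdepth_Neg vars_Neg)
  qed
  from sep_world[OF this] obtain u where u: "u \<in> W" "fst u = m" "Neg A \<in> fst (snd u)" "A' \<in> snd (snd u)"
    by auto
  have "u \<in> tau2 A' \<inter> H m" using u by (simp add: tau2_def H_def)
  then have "u \<in> tau1 A" using assms by blast
  then show False using u(3) W_mcs[OF u(1)] mcs_neg by (auto simp: tau1_def)
qed

lemma cross:
  assumes "tau1 A \<inter> H m = tau2 A' \<inter> H m"
  shows "\<exists>C. vars C \<subseteq> V0 \<and> cdepth C \<le> m \<and> Imp A C \<in> L \<and> Imp C A \<in> L \<and> Imp A' C \<in> L \<and> Imp C A' \<in> L"
proof -
  obtain C where C: "vars C \<subseteq> V0" "cdepth C \<le> m" "Imp A C \<in> L" "Imp C A' \<in> L" using eq12[OF assms] by blast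
  obtain D where D: "Imp A' D \<in> L" "Imp D A \<in> L" using eq21[OF assms] by blast
  have "Imp C A \<in> L" by (rule L_prop3[OF _ C(4) D]) auto
  moreover have "Imp A' C \<in> L" by (rule L_prop3[OF _ D C(3)]) auto
  ultimately show ?thesis using C by blast
qed



lemma K1_S1: "w \<in> W \<Longrightarrow> A \<in> K1 w X \<Longrightarrow> S1 w X = {B. Cond A B \<in> fst (snd w)}"
proof -
  assume w: "w \<in> W" and A: "A \<in> K1 w X"
  have eq: "Cond A'' B \<in> fst (snd w) \<longleftrightarrow> Cond A B \<in> fst (snd w)" if "A'' \<in> K1 w X" for A'' B
  proof -
    have e: "tau1 A'' \<inter> H (fst w - 1) = tau1 A \<inter> H (fst w - 1)" using A that by (auto simp: K1_def)
    show ?thesis using cond_eqA[OF conjunct1[OF W_mcs[OF w]] eq1[OF e] eq1[OF e[symmetric]]] .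
  qed
  show ?thesis
  proof (rule set_eqI)
    fix B
    show "B \<in> S1 w X \<longleftrightarrow> B \<in> {B. Cond A B \<in> fst (snd w)}"
    proof
      assume "B \<in> S1 w X"
      then obtain A'' where a: "A'' \<in> K1 w X" "Cond A'' B \<in> fst (snd w)" unfolding S1_def by blast
      show "B \<in> {B. Cond A B \<in> fst (snd w)}" using a eq[OF a(1), of B] by simp
    next
      assume "B \<in> {B. Cond A B \<in> fst (snd w)}"
      then show "B \<in> S1 w X" using A unfolding S1_def by blast
    qed
  qed
qed

lemma K2_S2: "w \<in> W \<Longrightarrow> A \<in> K2 w X \<Longrightarrow> S2 w X = {B. cdepth B < fst w \<and> Cond A B \<in> snd (snd w)}"
proof -
  assume w: "w \<in> W" and A: "A \<in> K2 w X"
  have eq: "Cond A'' B \<in> snd (snd w) \<longleftrightarrow> Cond A B \<in> snd (snd w)" if "A'' \<in> K2 w X" for A'' B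
  proof -
    have e: "tau2 A'' \<inter> H (fst w - 1) = tau2 A \<inter> H (fst w - 1)" using A that by (auto simp: K2_def)
    show ?thesis using cond_eqA[OF conjunct2[OF W_mcs[OF w]] eq2[OF e] eq2[OF e[symmetric]]] .
  qed
  show ?thesis
  proof (rule set_eqI)
    fix B
    show "B \<in> S2 w X \<longleftrightarrow> B \<in> {B. cdepth B < fst w \<and> Cond A B \<in> snd (snd w)}"
    proof
      assume "B \<in> S2 w X"
      then obtain A'' where a: "A'' \<in> K2 w X" "cdepth B < fst w \<and> Cond A'' B \<in> snd (snd w)" unfolding S2_def by blast
      show "B \<in> {B. cdepth B < fst w \<and> Cond A B \<in> snd (snd w)}" using a eq[OF a(1), of B] by simp
    next
      assume "B \<in> {B. cdepth B < fst w \<and> Cond A B \<in> snd (snd w)}"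
      then show "B \<in> S2 w X" using A unfolding S2_def by blast
    qed
  qed
qed

lemma transfer:
  assumes w: "w \<in> W" and A: "A \<in> K1 w X" and A': "A' \<in> K2 w X"
    and th: "vars \<theta> \<subseteq> V0" "cdepth \<theta> \<le> fst w - 1"
  shows "Cond A \<theta> \<in> fst (snd w) \<longleftrightarrow> Cond A' \<theta> \<in> snd (snd w)"
proof -
  have pos: "cdepth A' < fst w" using A' by (auto simp: K2_def)
  have "tau1 A \<inter> H (fst w - 1) = tau2 A' \<inter> H (fst w - 1)" using A A' by (auto simp: K1_def K2_def)
  from cross[OF this] obtain C where C: "vars C \<subseteq> V0" "cdepth C \<le> fst w - 1" "Imp A C \<in> L" "Imp C A \<in> L"
    "Imp A' C \<in> L" "Imp C A' \<in> L" by blast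
  have m: "mcs (fst (snd w))" "mcs (snd (snd w))" using W_mcs[OF w] by auto
  have "Cond A \<theta> \<in> fst (snd w) \<longleftrightarrow> Cond C \<theta> \<in> fst (snd w)" using cond_eqA[OF m(1) C(3,4)] .
  also have "\<dots> \<longleftrightarrow> Cond C \<theta> \<in> snd (snd w)"
    by (rule W_agree[OF w]) (use C th pos in auto)
  also have "\<dots> \<longleftrightarrow> Cond A' \<theta> \<in> snd (snd w)" using cond_eqA[OF m(2) C(6,5)] .
  finally show ?thesis .
qed

lemma succ_ex:
  assumes w: "w \<in> W" and b1: "Bot \<notin> S1 w X" and b2: "Bot \<notin> S2 w X"
  shows "succs w X \<noteq> {}"
proof -
  have m: "mcs (fst (snd w))" "mcs (snd (snd w))" using W_mcs[OF w] by auto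
  have "insep V0 (fst w - 1) (S1 w X) (S2 w X)"
  proof (rule ccontr)
    assume "\<not> insep V0 (fst w - 1) (S1 w X) (S2 w X)"
    then obtain t where t: "vars t \<subseteq> V0" "cdepth t \<le> fst w - 1" "der Ax (S1 w X) t" "der Ax (S2 w X) (Neg t)"
      by (auto simp: insep_def)
    have c1: "Cond A t \<in> fst (snd w)" if "A \<in> K1 w X" for A
      using cond_der[OF m(1)] t(3) K1_S1[OF w that] by simp
    have c2: "Cond A (Neg t) \<in> snd (snd w)" if "A \<in> K2 w X" for A
    proof -
      have "S2 w X \<subseteq> {B. Cond A B \<in> snd (snd w)}" using K2_S2[OF w that] by auto
      then have "der Ax {B. Cond A B \<in> snd (snd w)} (Neg t)" by (rule der_mono[OF t(4)])
      then show ?thesis by (rule cond_der[OF m(2)])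
    qed
    show False
    proof (cases "K2 w X = {}")
      case True
      then have "S2 w X = {}" by (auto simp: S2_def)
      then have nt: "Neg t \<in> L" using t(4) by (simp add: der_empty)
      show False
      proof (cases "K1 w X = {}")
        case True
        then have "S1 w X = {}" by (auto simp: S1_def)
        then have "t \<in> L" using t(3) by (simp add: der_empty)
        then have "Bot \<in> L" using nt by (auto elim: L_prop2[rotated 1])
        then show False using mcs_L[OF m(1)] mcs_Bot[OF m(1)] by auto
      next
        case False
        then obtain A where A: "A \<in> K1 w X" by auto
        have "Cond A (Neg t) \<in> fst (snd w)"
          using cond_der[OF m(1), of A "Neg t"] der_L[OF nt] by auto
        then have "Cond A Bot \<in> fst (snd w)" using cond_bot[OF m(1) c1[OF A]] by auto
        then show False using b1 A by (auto simp: S1_def)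
      qed
    next
      case False
      then obtain A' where A': "A' \<in> K2 w X" by auto
      have "Cond A' t \<in> snd (snd w)"
      proof (cases "K1 w X = {}")
        case True
        then have "S1 w X = {}" by (auto simp: S1_def)
        then have "t \<in> L" using t(3) by (simp add: der_empty)
        then show ?thesis using cond_der[OF m(2), of A' t] der_L by auto
      next
        case False
        then obtain A where A: "A \<in> K1 w X" by auto
        show ?thesis using transfer[OF w A A' t(1,2)] c1[OF A] by simp
      qed
      then have "Cond A' Bot \<in> snd (snd w)" using cond_bot[OF m(2) _ c2[OF A']] by auto
      moreover have "cdepth Bot < fst w" using A' by (auto simp: K2_def)
      ultimately show False using b2 A' by (auto simp: S2_def)
    qed
  qed
  from sep_world[OF this] obtain u where u: "u \<in> W" "fst u = fst w - 1" "S1 w X \<subseteq> fst (snd u)"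
    "S2 w X \<subseteq> snd (snd u)" by blast
  then have "u \<in> succs w X" by (simp add: succs_def)
  then show ?thesis by blast
qed

lemma fM_sub:
  assumes "u \<in> fM w X"
  shows "u \<in> succs w X"
proof -
  have ne: "succs w X \<noteq> {}" and u: "u = (SOME u. u \<in> succs w X)"
    using assms by (auto simp: fM_def split: if_splits)
  show ?thesis using ne by (simp add: u some_in_eq)
qed

lemma fM_ex: "w \<in> W \<Longrightarrow> K1 w X \<noteq> {} \<or> K2 w X \<noteq> {} \<Longrightarrow> succs w X \<noteq> {} \<Longrightarrow> \<exists>u. fM w X = {u}"
  by (rule exI[of _ "SOME u. u \<in> succs w X"]) (simp add: fM_def)

lemma succs_W: "u \<in> succs w X \<Longrightarrow> u \<in> W \<and> fst u = fst w - 1 \<and> S1 w X \<subseteq> fst (snd u) \<and> S2 w X \<subseteq> snd (snd u)"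
  by (auto simp: succs_def)


lemma truth:
  "w \<in> W \<Longrightarrow> (vars \<chi> \<subseteq> V1 \<longrightarrow> (sat fM val w \<chi> \<longleftrightarrow> \<chi> \<in> fst (snd w))) \<and>
     (vars \<chi> \<subseteq> V2 \<longrightarrow> cdepth \<chi> \<le> fst w \<longrightarrow> (sat fM val w \<chi> \<longleftrightarrow> \<chi> \<in> snd (snd w)))"
proof (induct \<chi> arbitrary: w)
  case (Atom p)
  show ?case
  proof (intro conjI impI)
    assume "vars (Atom p) \<subseteq> V1"
    then show "sat fM val w (Atom p) \<longleftrightarrow> Atom p \<in> fst (snd w)" by (simp add: val_def)
  next
    assume v: "vars (Atom p) \<subseteq> V2" "cdepth (Atom p) \<le> fst w"
    show "sat fM val w (Atom p) \<longleftrightarrow> Atom p \<in> snd (snd w)"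
    proof (cases "p \<in> V1")
      case True
      then have "vars (Atom p) \<subseteq> V0" using v by simp
      then show ?thesis using W_agree[OF Atom, of "Atom p"] True by (simp add: val_def)
    next
      case False
      then show ?thesis by (simp add: val_def)
    qed
  qed
next
  case Bot
  then show ?case using W_mcs[OF Bot] mcs_Bot by simp
next
  case (And A B)
  note w = And(3)
  have m: "mcs (fst (snd w))" "mcs (snd (snd w))" using W_mcs[OF w] by auto
  note IA = And(1)[OF w] and IB = And(2)[OF w]
  show ?case
  proof (intro conjI impI)
    assume v: "vars (And A B) \<subseteq> V1"
    then have "sat fM val w A \<longleftrightarrow> A \<in> fst (snd w)" "sat fM val w B \<longleftrightarrow> B \<in> fst (snd w)"
      using IA IB by simp_all
    then show "sat fM val w (And A B) \<longleftrightarrow> And A B \<in> fst (snd w)" by (simp add: mcs_And[OF m(1)])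
  next
    assume v: "vars (And A B) \<subseteq> V2" "cdepth (And A B) \<le> fst w"
    then have "sat fM val w A \<longleftrightarrow> A \<in> snd (snd w)" "sat fM val w B \<longleftrightarrow> B \<in> snd (snd w)"
      using IA IB by simp_all
    then show "sat fM val w (And A B) \<longleftrightarrow> And A B \<in> snd (snd w)" by (simp add: mcs_And[OF m(2)])
  qed
next
  case (Or A B)
  note w = Or(3)
  have m: "mcs (fst (snd w))" "mcs (snd (snd w))" using W_mcs[OF w] by auto
  note IA = Or(1)[OF w] and IB = Or(2)[OF w]
  show ?case
  proof (intro conjI impI)
    assume v: "vars (Or A B) \<subseteq> V1"
    then have "sat fM val w A \<longleftrightarrow> A \<in> fst (snd w)" "sat fM val w B \<longleftrightarrow> B \<in> fst (snd w)"
      using IA IB by simp_all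
    then show "sat fM val w (Or A B) \<longleftrightarrow> Or A B \<in> fst (snd w)" by (simp add: mcs_Or[OF m(1)])
  next
    assume v: "vars (Or A B) \<subseteq> V2" "cdepth (Or A B) \<le> fst w"
    then have "sat fM val w A \<longleftrightarrow> A \<in> snd (snd w)" "sat fM val w B \<longleftrightarrow> B \<in> snd (snd w)"
      using IA IB by simp_all
    then show "sat fM val w (Or A B) \<longleftrightarrow> Or A B \<in> snd (snd w)" by (simp add: mcs_Or[OF m(2)])
  qed
next
  case (Imp A B)
  note w = Imp(3)
  have m: "mcs (fst (snd w))" "mcs (snd (snd w))" using W_mcs[OF w] by auto
  note IA = Imp(1)[OF w] and IB = Imp(2)[OF w]
  show ?case
  proof (intro conjI impI)
    assume v: "vars (Imp A B) \<subseteq> V1"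
    then have "sat fM val w A \<longleftrightarrow> A \<in> fst (snd w)" "sat fM val w B \<longleftrightarrow> B \<in> fst (snd w)"
      using IA IB by simp_all
    then show "sat fM val w (Imp A B) \<longleftrightarrow> Imp A B \<in> fst (snd w)" by (simp add: mcs_Imp[OF m(1)])
  next
    assume v: "vars (Imp A B) \<subseteq> V2" "cdepth (Imp A B) \<le> fst w"
    then have "sat fM val w A \<longleftrightarrow> A \<in> snd (snd w)" "sat fM val w B \<longleftrightarrow> B \<in> snd (snd w)"
      using IA IB by simp_all
    then show "sat fM val w (Imp A B) \<longleftrightarrow> Imp A B \<in> snd (snd w)" by (simp add: mcs_Imp[OF m(2)])
  qed
next
  case (Cond A B)
  note w = Cond(3)
  have m: "mcs (fst (snd w))" "mcs (snd (snd w))" using W_mcs[OF w] by auto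
  define X where "X = {x. sat fM val x A}"
  have satC: "sat fM val w (Cond A B) = (\<forall>u\<in>fM w X. sat fM val u B)" by (simp add: X_def)
  have HW: "u \<in> W" if "u \<in> H k" for u k using that by (simp add: H_def)
  have tb: "Imp Bot B \<in> L" by (rule L_taut) simp
  have part1: "sat fM val w (Cond A B) \<longleftrightarrow> Cond A B \<in> fst (snd w)" if v: "vars (Cond A B) \<subseteq> V1"
  proof -
    have "u \<in> X \<longleftrightarrow> u \<in> tau1 A" if "u \<in> H (fst w - 1)" for u
      using conjunct1[OF Cond(1)[OF HW[OF that]]] v by (simp add: X_def tau1_def)
    then have "X \<inter> H (fst w - 1) = tau1 A \<inter> H (fst w - 1)" by blast
    then have A: "A \<in> K1 w X" by (simp add: K1_def)
    note S1eq = K1_S1[OF w A]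
    show ?thesis
    proof
      assume "Cond A B \<in> fst (snd w)"
      then have BS: "B \<in> S1 w X" using S1eq by simp
      show "sat fM val w (Cond A B)" unfolding satC
      proof
        fix u assume "u \<in> fM w X"
        then have uu: "u \<in> W" "B \<in> fst (snd u)" using succs_W[OF fM_sub] BS by blast+
        show "sat fM val u B" using conjunct1[OF Cond(2)[OF uu(1)]] v uu(2) by simp
      qed
    next
      assume s: "sat fM val w (Cond A B)"
      show "Cond A B \<in> fst (snd w)"
      proof (rule ccontr)
        assume n: "Cond A B \<notin> fst (snd w)"
        have nb: "Cond A Bot \<notin> fst (snd w)"
          using mcs_mp[OF m(1) cond_mono[OF tb]] n by blast
        have b1: "Bot \<notin> S1 w X" using S1eq nb by simp
        have b2: "Bot \<notin> S2 w X"
        proof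
          assume "Bot \<in> S2 w X"
          then obtain A' where A': "A' \<in> K2 w X" "Cond A' Bot \<in> snd (snd w)" unfolding S2_def by blast
          have "cdepth Bot \<le> fst w - 1" "vars Bot \<subseteq> V0" by simp_all
          then show False using transfer[OF w A A'(1)] A'(2) nb by blast
        qed
        obtain u where u: "fM w X = {u}" using fM_ex[OF w _ succ_ex[OF w b1 b2]] A by blast
        then have us: "u \<in> succs w X" using fM_sub by blast
        have "Neg B \<in> S1 w X" using S1eq cond_cem[OF m(1) n] by simp
        then have uW: "u \<in> W" and nB: "Neg B \<in> fst (snd u)" using succs_W[OF us] by blast+
        have "B \<notin> fst (snd u)" using mcs_neg[OF conjunct1[OF W_mcs[OF uW]]] nB by simp
        then have "\<not> sat fM val u B" using conjunct1[OF Cond(2)[OF uW]] v by simp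
        then show False using s u satC by simp
      qed
    qed
  qed
  have part2: "sat fM val w (Cond A B) \<longleftrightarrow> Cond A B \<in> snd (snd w)"
    if v: "vars (Cond A B) \<subseteq> V2" and d: "cdepth (Cond A B) \<le> fst w"
  proof -
    have dA: "cdepth A < fst w" "cdepth B < fst w" using d by auto
    have "u \<in> X \<longleftrightarrow> u \<in> tau2 A" if "u \<in> H (fst w - 1)" for u
    proof -
      have "fst w - 1 \<le> fst u" using that by (simp add: H_def)
      then have "cdepth A \<le> fst u" using dA by linarith
      then show ?thesis using conjunct2[OF Cond(1)[OF HW[OF that]]] v by (simp add: X_def tau2_def)
    qed
    then have "X \<inter> H (fst w - 1) = tau2 A \<inter> H (fst w - 1)" by blast
    then have A: "A \<in> K2 w X" using dA by (simp add: K2_def)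
    note S2eq = K2_S2[OF w A]
    show ?thesis
    proof
      assume "Cond A B \<in> snd (snd w)"
      then have BS: "B \<in> S2 w X" using S2eq dA by simp
      show "sat fM val w (Cond A B)" unfolding satC
      proof
        fix u assume "u \<in> fM w X"
        then have uu: "u \<in> W" "B \<in> snd (snd u)" "fst u = fst w - 1" using succs_W[OF fM_sub] BS by blast+
        have "cdepth B \<le> fst u" using uu(3) dA by simp
        then show "sat fM val u B" using conjunct2[OF Cond(2)[OF uu(1)]] v uu(2) by simp
      qed
    next
      assume s: "sat fM val w (Cond A B)"
      show "Cond A B \<in> snd (snd w)"
      proof (rule ccontr)
        assume n: "Cond A B \<notin> snd (snd w)"
        have nb: "Cond A Bot \<notin> snd (snd w)"
          using mcs_mp[OF m(2) cond_mono[OF tb]] n by blast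
        have b2: "Bot \<notin> S2 w X" using S2eq nb by simp
        have b1: "Bot \<notin> S1 w X"
        proof
          assume "Bot \<in> S1 w X"
          then obtain A' where A': "A' \<in> K1 w X" "Cond A' Bot \<in> fst (snd w)" unfolding S1_def by blast
          have "cdepth Bot \<le> fst w - 1" "vars Bot \<subseteq> V0" by simp_all
          then show False using transfer[OF w A'(1) A] A'(2) nb by blast
        qed
        obtain u where u: "fM w X = {u}" using fM_ex[OF w _ succ_ex[OF w b1 b2]] A by blast
        then have us: "u \<in> succs w X" using fM_sub by blast
        have "Neg B \<in> S2 w X" using S2eq cond_cem[OF m(2) n] dA by simp
        then have uW: "u \<in> W" and nB: "Neg B \<in> snd (snd u)" and fu: "fst u = fst w - 1"
          using succs_W[OF us] by blast+
        have "B \<notin> snd (snd u)" using mcs_neg[OF conjunct2[OF W_mcs[OF uW]]] nB by simp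
        moreover have "cdepth B \<le> fst u" using fu dA by simp
        ultimately have "\<not> sat fM val u B" using conjunct2[OF Cond(2)[OF uW]] v by simp
        then show False using s u satC by simp
      qed
    qed
  qed
  show ?case using part1 part2 by blast
qed

lemma fM_fun: "u \<in> fM w X \<Longrightarrow> v \<in> fM w X \<Longrightarrow> u = v"
  by (auto simp: fM_def split: if_splits)

lemma fM_id: "b \<Longrightarrow> fM w X \<subseteq> X"
proof
  fix u assume bb: b and u: "u \<in> fM w X"
  then have w: "w \<in> W" and k: "K1 w X \<noteq> {} \<or> K2 w X \<noteq> {}" by (auto simp: fM_def split: if_splits)
  have us: "u \<in> succs w X" using fM_sub[OF u] .
  note uu = succs_W[OF us]
  have m: "mcs (fst (snd w))" "mcs (snd (snd w))" using W_mcs[OF w] by auto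
  have uH: "u \<in> H (fst w - 1)" using uu by (auto simp: H_def)
  show "u \<in> X"
  proof (cases "K1 w X = {}")
    case False
    then obtain A where A: "A \<in> K1 w X" by auto
    have "A \<in> S1 w X" using K1_S1[OF w A] mcs_L[OF m(1) ax_ID[OF bb]] by simp
    then have "u \<in> tau1 A \<inter> H (fst w - 1)" using uu uH by (auto simp: tau1_def)
    then show ?thesis using A by (auto simp: K1_def)
  next
    case True
    then obtain A where A: "A \<in> K2 w X" using k by auto
    have "A \<in> S2 w X" using K2_S2[OF w A] mcs_L[OF m(2) ax_ID[OF bb]] A by (simp add: K2_def)
    then have "u \<in> tau2 A \<inter> H (fst w - 1)" using uu uH by (auto simp: tau2_def)
    then show ?thesis using A by (auto simp: K2_def)
  qed
qed

lemma interp: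
  assumes imp: "Imp \<psi> \<phi> \<in> L" and v: "vars \<psi> \<subseteq> V1" "vars \<phi> \<subseteq> V2"
  shows "\<exists>\<theta>. vars \<theta> \<subseteq> V0 \<and> cdepth \<theta> \<le> cdepth \<phi> \<and> Imp \<psi> \<theta> \<in> L \<and> Imp \<theta> \<phi> \<in> L"
proof (rule ccontr)
  assume n: "\<not> ?thesis"
  have "insep V0 (cdepth \<phi>) {\<psi>} {Neg \<phi>}"
  proof (rule ccontr)
    assume "\<not> insep V0 (cdepth \<phi>) {\<psi>} {Neg \<phi>}"
    then obtain t where t: "vars t \<subseteq> V0" "cdepth t \<le> cdepth \<phi>" "der Ax (set [\<psi>]) t" "der Ax (set [Neg \<phi>]) (Neg t)"
      by (auto simp: insep_def)
    have "Imp \<psi> t \<in> L" using der_set[OF t(3)] by (rule L_prop1[rotated]) (auto simp: conj_def)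
    moreover have "Imp t \<phi> \<in> L" using der_set[OF t(4)] by (rule L_prop1[rotated]) (auto simp: conj_def)
    ultimately show False using n t by blast
  qed
  from sep_world[OF this] obtain u where u: "u \<in> W" "fst u = cdepth \<phi>" "\<psi> \<in> fst (snd u)" "Neg \<phi> \<in> snd (snd u)"
    by auto
  have "sat fM val u \<psi>" using truth[OF u(1)] v u by auto
  moreover have "\<not> sat fM val u \<phi>" using truth[OF u(1)] v u W_mcs[OF u(1)] by (auto simp: mcs_neg)
  moreover have "sat fM val u (Imp \<psi> \<phi>)"
  proof (rule soundness)
    show "\<And>w X u v. u \<in> fM w X \<Longrightarrow> v \<in> fM w X \<Longrightarrow> u = v" by (erule fM_fun)
    show "b \<Longrightarrow> \<forall>w X. fM w X \<subseteq> X" by (intro allI fM_id)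
    show "Imp \<psi> \<phi> \<in> L" by (rule imp)
  qed
  ultimately show False by simp
qed

end

section \<open>Finitely many formulas up to equivalence\<close>

lemma cdepth_conj: "(\<forall>x\<in>set xs. cdepth x \<le> d) \<Longrightarrow> cdepth (conj xs) \<le> d"
  by (induct xs) (auto simp: conj_def)
lemma cdepth_disj: "(\<forall>x\<in>set xs. cdepth x \<le> d) \<Longrightarrow> cdepth (disj xs) \<le> d"
  by (induct xs) (auto simp: disj_def)
lemma finite_vars: "finite (vars A)" by (induct A) auto

context clogic
begin

lemma mcs_imp:
  assumes "\<And>G. mcs G \<Longrightarrow> A \<in> G \<Longrightarrow> B \<in> G"
  shows "Imp A B \<in> L"
proof (rule ccontr)
  assume n: "Imp A B \<notin> L"
  have "insep {} 0 {A, Neg B} {}"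
  proof (rule ccontr)
    assume "\<not> insep {} 0 {A, Neg B} {}"
    then obtain t where t1: "der Ax {A, Neg B} t" and t2: "der Ax {} (Neg t)" by (auto simp: insep_def)
    have t3: "der Ax {A, Neg B} (Neg t)" using der_mono[OF t2, of "{A, Neg B}"] by auto
    have "der Ax {A, Neg B} Bot" by (rule der_prop2[OF _ t1 t3]) auto
    then have "der Ax (set [A, Neg B]) Bot" by simp
    then have "Imp (conj [A, Neg B]) Bot \<in> L" by (rule der_set)
    then have "Imp A B \<in> L" by (rule L_prop1[rotated]) (auto simp: conj_def)
    then show False using n by simp
  qed
  from extend[OF this] obtain G where "mcs G" "A \<in> G" "Neg B \<in> G" by auto
  then show False using assms mcs_neg by blast
qed

lemma cond_eq2: "mcs G \<Longrightarrow> Imp A a \<in> L \<Longrightarrow> Imp a A \<in> L \<Longrightarrow> Imp B c \<in> L \<Longrightarrow> Imp c B \<in> L \<Longrightarrow>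
   (Cond A B \<in> G) = (Cond a c \<in> G)"
  using cond_eqA[of G A a B] mcs_mp[OF _ cond_mono[of B c a]] mcs_mp[OF _ cond_mono[of c B a]] by blast

lemma bool_reps:
  assumes fin: "finite G" and Gb: "\<forall>g\<in>G. vars g \<subseteq> V \<and> cdepth g \<le> d"
    and det: "\<And>\<theta> \<Gamma> \<Gamma>'. P \<theta> \<Longrightarrow> mcs \<Gamma> \<Longrightarrow> mcs \<Gamma>' \<Longrightarrow> \<Gamma> \<inter> G = \<Gamma>' \<inter> G \<Longrightarrow> (\<theta> \<in> \<Gamma> \<longleftrightarrow> \<theta> \<in> \<Gamma>')"
  shows "\<exists>R. finite R \<and> (\<forall>r\<in>R. vars r \<subseteq> V \<and> cdepth r \<le> d) \<and>
           (\<forall>\<theta>. P \<theta> \<longrightarrow> (\<exists>r\<in>R. Imp \<theta> r \<in> L \<and> Imp r \<theta> \<in> L))"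
proof -
  obtain gs where gs: "set gs = G" using finite_list[OF fin] by blast
  define lit where "lit s g = (if g \<in> s then g else Neg g)" for s :: "fm set" and g
  define trm where "trm s = conj (map (lit s) gs)" for s
  define lst where "lst S = (SOME xs. set xs = S)" for S :: "fm set set"
  define dnf where "dnf S = disj (map trm (lst S))" for S
  have lst: "set (lst S) = S" if "S \<subseteq> Pow G" for S
  proof -
    have "finite S" using that fin by (meson finite_Pow_iff finite_subset)
    then show ?thesis unfolding lst_def by (metis (mono_tags) finite_list someI_ex)
  qed
  have trm_mem: "trm s \<in> D \<longleftrightarrow> D \<inter> G = s" if "mcs D" "s \<subseteq> G" for D s
  proof -
    have "trm s \<in> D \<longleftrightarrow> (\<forall>g\<in>G. lit s g \<in> D)"
      using gs by (simp add: trm_def mcs_conj[OF that(1)])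
    also have "\<dots> \<longleftrightarrow> (\<forall>g\<in>G. g \<in> D \<longleftrightarrow> g \<in> s)"
      by (simp add: lit_def mcs_neg[OF that(1)]) blast
    also have "\<dots> \<longleftrightarrow> D \<inter> G = s" using that(2) by blast
    finally show ?thesis .
  qed
  have dnf_mem: "dnf S \<in> D \<longleftrightarrow> D \<inter> G \<in> S" if "mcs D" "S \<subseteq> Pow G" for D S
  proof -
    have "dnf S \<in> D \<longleftrightarrow> (\<exists>s\<in>S. trm s \<in> D)"
      using lst[OF that(2)] by (simp add: dnf_def mcs_disj[OF that(1)])
    also have "\<dots> \<longleftrightarrow> (\<exists>s\<in>S. D \<inter> G = s)"
      using trm_mem[OF that(1)] that(2) by blast
    also have "\<dots> \<longleftrightarrow> D \<inter> G \<in> S" by blast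
    finally show ?thesis .
  qed
  define R where "R = dnf ` Pow (Pow G)"
  have "finite R" using fin by (simp add: R_def)
  moreover have "\<forall>r\<in>R. vars r \<subseteq> V \<and> cdepth r \<le> d"
  proof
    fix r assume "r \<in> R"
    then obtain S where S: "S \<subseteq> Pow G" "r = dnf S" by (auto simp: R_def)
    have "vars (trm s) \<subseteq> V \<and> cdepth (trm s) \<le> d" for s
      using Gb gs by (auto simp: trm_def lit_def intro!: cdepth_conj)
    then show "vars r \<subseteq> V \<and> cdepth r \<le> d" using S by (auto simp: dnf_def intro!: cdepth_disj)
  qed
  moreover have "\<exists>r\<in>R. Imp \<theta> r \<in> L \<and> Imp r \<theta> \<in> L" if P: "P \<theta>" for \<theta>
  proof -
    define S where "S = {\<Gamma> \<inter> G | \<Gamma>. mcs \<Gamma> \<and> \<theta> \<in> \<Gamma>}"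
    have SG: "S \<subseteq> Pow G" by (auto simp: S_def)
    have key: "dnf S \<in> D \<longleftrightarrow> \<theta> \<in> D" if "mcs D" for D
    proof -
      have "dnf S \<in> D \<longleftrightarrow> D \<inter> G \<in> S" by (rule dnf_mem[OF that SG])
      also have "\<dots> \<longleftrightarrow> (\<exists>\<Gamma>. mcs \<Gamma> \<and> \<theta> \<in> \<Gamma> \<and> \<Gamma> \<inter> G = D \<inter> G)"
        unfolding S_def by blast
      also have "\<dots> \<longleftrightarrow> \<theta> \<in> D"
      proof
        assume "\<exists>\<Gamma>. mcs \<Gamma> \<and> \<theta> \<in> \<Gamma> \<and> \<Gamma> \<inter> G = D \<inter> G"
        then obtain \<Gamma> where "mcs \<Gamma>" "\<theta> \<in> \<Gamma>" "\<Gamma> \<inter> G = D \<inter> G" by blast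
        then show "\<theta> \<in> D" using det[OF P \<open>mcs \<Gamma>\<close> that] by blast
      next
        assume "\<theta> \<in> D" then show "\<exists>\<Gamma>. mcs \<Gamma> \<and> \<theta> \<in> \<Gamma> \<and> \<Gamma> \<inter> G = D \<inter> G" using that by blast
      qed
      finally show ?thesis .
    qed
    have "dnf S \<in> R" using SG by (auto simp: R_def)
    moreover have "Imp \<theta> (dnf S) \<in> L" "Imp (dnf S) \<theta> \<in> L" using key by (auto intro!: mcs_imp)
    ultimately show ?thesis by blast
  qed
  ultimately show ?thesis by blast
qed

lemma det_gen:
  assumes G: "mcs \<Gamma>" "mcs \<Gamma>'" and eqG: "\<Gamma> \<inter> GG = \<Gamma>' \<inter> GG"
    and atoms: "\<And>x. x \<in> V \<Longrightarrow> Atom x \<in> GG"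
    and conds: "\<And>A B. vars A \<subseteq> V \<Longrightarrow> vars B \<subseteq> V \<Longrightarrow> cdepth (Cond A B) \<le> d \<Longrightarrow>
       (Cond A B \<in> \<Gamma> \<longleftrightarrow> Cond A B \<in> \<Gamma>')"
  shows "vars \<theta> \<subseteq> V \<Longrightarrow> cdepth \<theta> \<le> d \<Longrightarrow> (\<theta> \<in> \<Gamma> \<longleftrightarrow> \<theta> \<in> \<Gamma>')"
proof (induct \<theta>)
  case (Atom x)
  then have "Atom x \<in> GG" using atoms by simp
  then show ?case using eqG by blast
next
  case Bot
  show ?case using mcs_Bot[OF G(1)] mcs_Bot[OF G(2)] by simp
next
  case (And A B)
  have IA: "A \<in> \<Gamma> \<longleftrightarrow> A \<in> \<Gamma>'" by (rule And.hyps(1)) (use And.prems in simp_all)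
  have IB: "B \<in> \<Gamma> \<longleftrightarrow> B \<in> \<Gamma>'" by (rule And.hyps(2)) (use And.prems in simp_all)
  show ?case using IA IB by (simp add: mcs_And[OF G(1)] mcs_And[OF G(2)])
next
  case (Or A B)
  have IA: "A \<in> \<Gamma> \<longleftrightarrow> A \<in> \<Gamma>'" by (rule Or.hyps(1)) (use Or.prems in simp_all)
  have IB: "B \<in> \<Gamma> \<longleftrightarrow> B \<in> \<Gamma>'" by (rule Or.hyps(2)) (use Or.prems in simp_all)
  show ?case using IA IB by (simp add: mcs_Or[OF G(1)] mcs_Or[OF G(2)])
next
  case (Imp A B)
  have IA: "A \<in> \<Gamma> \<longleftrightarrow> A \<in> \<Gamma>'" by (rule Imp.hyps(1)) (use Imp.prems in simp_all)
  have IB: "B \<in> \<Gamma> \<longleftrightarrow> B \<in> \<Gamma>'" by (rule Imp.hyps(2)) (use Imp.prems in simp_all)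
  show ?case using IA IB by (simp add: mcs_Imp[OF G(1)] mcs_Imp[OF G(2)])
next
  case (Cond A B)
  then show ?case using conds[of A B] by simp
qed

lemma reps:
  assumes fV: "finite V"
  shows "\<exists>R. finite R \<and> (\<forall>r\<in>R. vars r \<subseteq> V \<and> cdepth r \<le> d) \<and>
           (\<forall>\<theta>. vars \<theta> \<subseteq> V \<longrightarrow> cdepth \<theta> \<le> d \<longrightarrow> (\<exists>r\<in>R. Imp \<theta> r \<in> L \<and> Imp r \<theta> \<in> L))"
proof (induct d)
  case 0
  have fG: "finite (Atom ` V)" using fV by simp
  have Gb: "\<forall>g\<in>Atom ` V. vars g \<subseteq> V \<and> cdepth g \<le> 0" by auto
  have det: "\<theta> \<in> \<Gamma> \<longleftrightarrow> \<theta> \<in> \<Gamma>'" if "vars \<theta> \<subseteq> V \<and> cdepth \<theta> \<le> 0" "mcs \<Gamma>" "mcs \<Gamma>'"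
    "\<Gamma> \<inter> Atom ` V = \<Gamma>' \<inter> Atom ` V" for \<theta> \<Gamma> \<Gamma>'
  proof (rule det_gen[OF that(2,3,4), of V 0])
    show "\<And>x. x \<in> V \<Longrightarrow> Atom x \<in> Atom ` V" by simp
    show "\<And>A B. cdepth (Cond A B) \<le> 0 \<Longrightarrow> Cond A B \<in> \<Gamma> \<longleftrightarrow> Cond A B \<in> \<Gamma>'" by simp
    show "vars \<theta> \<subseteq> V" "cdepth \<theta> \<le> 0" using that(1) by simp_all
  qed
  have "\<exists>R. finite R \<and> (\<forall>r\<in>R. vars r \<subseteq> V \<and> cdepth r \<le> 0) \<and>
           (\<forall>\<theta>. (vars \<theta> \<subseteq> V \<and> cdepth \<theta> \<le> 0) \<longrightarrow> (\<exists>r\<in>R. Imp \<theta> r \<in> L \<and> Imp r \<theta> \<in> L))"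
    by (rule bool_reps[OF fG Gb, of "\<lambda>\<theta>. vars \<theta> \<subseteq> V \<and> cdepth \<theta> \<le> 0"]) (rule det)
  then obtain R' where r1: "finite R'" and r2: "\<forall>r\<in>R'. vars r \<subseteq> V \<and> cdepth r \<le> 0"
    and r3: "\<forall>\<theta>. (vars \<theta> \<subseteq> V \<and> cdepth \<theta> \<le> 0) \<longrightarrow> (\<exists>r\<in>R'. Imp \<theta> r \<in> L \<and> Imp r \<theta> \<in> L)"
    by (elim exE conjE)
  have r3': "\<forall>\<theta>. vars \<theta> \<subseteq> V \<longrightarrow> cdepth \<theta> \<le> 0 \<longrightarrow> (\<exists>r\<in>R'. Imp \<theta> r \<in> L \<and> Imp r \<theta> \<in> L)"
  proof (intro allI impI)
    fix \<theta> assume "vars \<theta> \<subseteq> V" "cdepth \<theta> \<le> 0"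
    then show "\<exists>r\<in>R'. Imp \<theta> r \<in> L \<and> Imp r \<theta> \<in> L" using r3[rule_format, of \<theta>] by simp
  qed
  show ?case by (intro exI[of _ R'] conjI r1 r2 r3')
next
  case (Suc d)
  then obtain R where R: "finite R" "\<forall>r\<in>R. vars r \<subseteq> V \<and> cdepth r \<le> d"
    "\<forall>\<theta>. vars \<theta> \<subseteq> V \<longrightarrow> cdepth \<theta> \<le> d \<longrightarrow> (\<exists>r\<in>R. Imp \<theta> r \<in> L \<and> Imp r \<theta> \<in> L)" by blast
  define G where "G = Atom ` V \<union> (\<lambda>(a, c). Cond a c) ` (R \<times> R)"
  have fG: "finite G" using fV R(1) by (simp add: G_def)
  have Gb: "\<forall>g\<in>G. vars g \<subseteq> V \<and> cdepth g \<le> Suc d"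
  proof
    fix g assume "g \<in> G"
    then consider (at) x where "x \<in> V" "g = Atom x" | (co) a c where "a \<in> R" "c \<in> R" "g = Cond a c"
      unfolding G_def by auto
    then show "vars g \<subseteq> V \<and> cdepth g \<le> Suc d"
    proof cases
      case at then show ?thesis by simp
    next
      case co
      then have "vars a \<subseteq> V \<and> cdepth a \<le> d" "vars c \<subseteq> V \<and> cdepth c \<le> d" using R(2) by blast+
      then show ?thesis using co by simp
    qed
  qed
  have det: "\<theta> \<in> \<Gamma> \<longleftrightarrow> \<theta> \<in> \<Gamma>'" if hyp: "vars \<theta> \<subseteq> V \<and> cdepth \<theta> \<le> Suc d" "mcs \<Gamma>" "mcs \<Gamma>'"
    "\<Gamma> \<inter> G = \<Gamma>' \<inter> G" for \<theta> \<Gamma> \<Gamma>'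
  proof (rule det_gen[OF hyp(2,3,4), of V "Suc d"])
    show "\<And>x. x \<in> V \<Longrightarrow> Atom x \<in> G" by (simp add: G_def)
    show "Cond A B \<in> \<Gamma> \<longleftrightarrow> Cond A B \<in> \<Gamma>'"
      if ab: "vars A \<subseteq> V" "vars B \<subseteq> V" "cdepth (Cond A B) \<le> Suc d" for A B
    proof -
      have "cdepth A \<le> d" "cdepth B \<le> d" using ab(3) by simp_all
      then obtain a c where a: "a \<in> R" "Imp A a \<in> L" "Imp a A \<in> L" and c: "c \<in> R" "Imp B c \<in> L" "Imp c B \<in> L"
        using R(3) ab(1,2) by blast
      have "Cond a c \<in> G" using a(1) c(1) by (auto simp: G_def)
      then have e: "Cond a c \<in> \<Gamma> \<longleftrightarrow> Cond a c \<in> \<Gamma>'" using hyp(4) by blast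
      show ?thesis using cond_eq2[OF hyp(2) a(2,3) c(2,3)] cond_eq2[OF hyp(3) a(2,3) c(2,3)] e by simp
    qed
    show "vars \<theta> \<subseteq> V" "cdepth \<theta> \<le> Suc d" using hyp(1) by simp_all
  qed
  have "\<exists>R. finite R \<and> (\<forall>r\<in>R. vars r \<subseteq> V \<and> cdepth r \<le> Suc d) \<and>
           (\<forall>\<theta>. (vars \<theta> \<subseteq> V \<and> cdepth \<theta> \<le> Suc d) \<longrightarrow> (\<exists>r\<in>R. Imp \<theta> r \<in> L \<and> Imp r \<theta> \<in> L))"
    by (rule bool_reps[OF fG Gb, of "\<lambda>\<theta>. vars \<theta> \<subseteq> V \<and> cdepth \<theta> \<le> Suc d"]) (rule det)
  then obtain R' where r1: "finite R'" and r2: "\<forall>r\<in>R'. vars r \<subseteq> V \<and> cdepth r \<le> Suc d"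
    and r3: "\<forall>\<theta>. (vars \<theta> \<subseteq> V \<and> cdepth \<theta> \<le> Suc d) \<longrightarrow> (\<exists>r\<in>R'. Imp \<theta> r \<in> L \<and> Imp r \<theta> \<in> L)"
    by (elim exE conjE)
  have r3': "\<forall>\<theta>. vars \<theta> \<subseteq> V \<longrightarrow> cdepth \<theta> \<le> Suc d \<longrightarrow> (\<exists>r\<in>R'. Imp \<theta> r \<in> L \<and> Imp r \<theta> \<in> L)"
  proof (intro allI impI)
    fix \<theta> assume "vars \<theta> \<subseteq> V" "cdepth \<theta> \<le> Suc d"
    then show "\<exists>r\<in>R'. Imp \<theta> r \<in> L \<and> Imp r \<theta> \<in> L" using r3[rule_format, of \<theta>] by simp
  qed
  show ?case by (intro exI[of _ R'] conjI r1 r2 r3')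
qed

lemma interp_gen:
  assumes "Imp \<psi> \<phi> \<in> L"
  shows "\<exists>\<theta>. vars \<theta> \<subseteq> vars \<psi> \<inter> vars \<phi> \<and> cdepth \<theta> \<le> cdepth \<phi> \<and> Imp \<psi> \<theta> \<in> L \<and> Imp \<theta> \<phi> \<in> L"
  using pairmodel.interp[of Ax b \<psi> \<phi> "vars \<psi>" "vars \<phi>"] assms clogic_axioms
  by (auto simp: pairmodel_def)

lemma CIP_L: "CIP L"
  unfolding CIP_def using interp_gen by blast


lemma UIP_L: "UIP L"
  unfolding UIP_def
proof (intro allI)
  fix \<phi> :: fm and p :: nat
  define V where "V = vars \<phi> - {p}"
  define d where "d = cdepth \<phi>"
  have fV: "finite V" using finite_vars[of \<phi>] by (simp add: V_def)
  from reps[OF fV, of d] obtain R where RR: "finite R \<and> (\<forall>r\<in>R. vars r \<subseteq> V \<and> cdepth r \<le> d) \<and>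
    (\<forall>\<theta>. vars \<theta> \<subseteq> V \<longrightarrow> cdepth \<theta> \<le> d \<longrightarrow> (\<exists>r\<in>R. Imp \<theta> r \<in> L \<and> Imp r \<theta> \<in> L))" ..
  have R: "finite R" "\<forall>r\<in>R. vars r \<subseteq> V \<and> cdepth r \<le> d"
    "\<forall>\<theta>. vars \<theta> \<subseteq> V \<longrightarrow> cdepth \<theta> \<le> d \<longrightarrow> (\<exists>r\<in>R. Imp \<theta> r \<in> L \<and> Imp r \<theta> \<in> L)"
    using RR by simp_all
  have f1: "finite {r\<in>R. Imp r \<phi> \<in> L}" and f2: "finite {r\<in>R. Imp \<phi> r \<in> L}" using R(1) by simp_all
  obtain as where as: "set as = {r\<in>R. Imp r \<phi> \<in> L}" using finite_list[OF f1] by blast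
  obtain es where es: "set es = {r\<in>R. Imp \<phi> r \<in> L}" using finite_list[OF f2] by blast
  have "\<forall>r\<in>set as. vars r \<subseteq> V" using as R(2) by blast
  then have "vars (disj as) \<subseteq> V" by (simp add: UN_least)
  then have vA: "p \<notin> vars (disj as)" "vars (disj as) \<subseteq> vars \<phi>" unfolding V_def by blast+
  have "\<forall>r\<in>set es. vars r \<subseteq> V" using es R(2) by blast
  then have "vars (conj es) \<subseteq> V" by (simp add: UN_least)
  then have vE: "p \<notin> vars (conj es)" "vars (conj es) \<subseteq> vars \<phi>" unfolding V_def by blast+
  have A1: "Imp (disj as) \<phi> \<in> L"
  proof (rule L_prop[of "map (\<lambda>r. Imp r \<phi>) as"])
    show "set (map (\<lambda>r. Imp r \<phi>) as) \<subseteq> L" using as by auto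
  next
    fix v assume "\<forall>h\<in>set (map (\<lambda>r. Imp r \<phi>) as). peval v h"
    then show "peval v (Imp (disj as) \<phi>)" by auto
  qed
  have E1: "Imp \<phi> (conj es) \<in> L"
  proof (rule L_prop[of "map (Imp \<phi>) es"])
    show "set (map (Imp \<phi>) es) \<subseteq> L" using es by auto
  next
    fix v assume "\<forall>h\<in>set (map (Imp \<phi>) es). peval v h"
    then show "peval v (Imp \<phi> (conj es))" by auto
  qed
  have A2: "Imp \<psi> (disj as) \<in> L" if hp: "p \<notin> vars \<psi>" "Imp \<psi> \<phi> \<in> L" for \<psi>
  proof -
    obtain \<theta> where th: "vars \<theta> \<subseteq> vars \<psi> \<inter> vars \<phi>" "cdepth \<theta> \<le> cdepth \<phi>" "Imp \<psi> \<theta> \<in> L" "Imp \<theta> \<phi> \<in> L"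
      using interp_gen[OF hp(2)] by blast
    have "vars \<theta> \<subseteq> V" using th(1) hp(1) by (auto simp: V_def)
    moreover have "cdepth \<theta> \<le> d" using th(2) by (simp add: d_def)
    ultimately have "\<exists>r\<in>R. Imp \<theta> r \<in> L \<and> Imp r \<theta> \<in> L" using R(3) by simp
    then obtain r where r: "r \<in> R" "Imp \<theta> r \<in> L" "Imp r \<theta> \<in> L" by blast
    have "Imp r \<phi> \<in> L" by (rule L_prop2[OF _ r(3) th(4)]) auto
    then have ra: "r \<in> set as" using as r(1) by simp
    have "Imp \<psi> r \<in> L" by (rule L_prop2[OF _ th(3) r(2)]) auto
    then show ?thesis by (rule L_prop1[rotated]) (use ra in auto)
  qed
  have E2: "Imp (conj es) \<psi> \<in> L" if hp: "p \<notin> vars \<psi>" "Imp \<phi> \<psi> \<in> L" for \<psi>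
  proof -
    have nn: "Imp (Neg \<psi>) (Neg \<phi>) \<in> L" using hp(2) by (rule L_prop1[rotated]) auto
    obtain \<theta> where th: "vars \<theta> \<subseteq> vars \<psi> \<inter> vars \<phi>" "cdepth \<theta> \<le> cdepth \<phi>"
      "Imp (Neg \<psi>) \<theta> \<in> L" "Imp \<theta> (Neg \<phi>) \<in> L"
      using interp_gen[OF nn] by auto
    have "vars (Neg \<theta>) \<subseteq> V" using th(1) hp(1) by (auto simp: V_def)
    moreover have "cdepth (Neg \<theta>) \<le> d" using th(2) by (simp add: d_def)
    ultimately have "\<exists>r\<in>R. Imp (Neg \<theta>) r \<in> L \<and> Imp r (Neg \<theta>) \<in> L" using R(3) by simp
    then obtain r where r: "r \<in> R" "Imp (Neg \<theta>) r \<in> L" "Imp r (Neg \<theta>) \<in> L" by blast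
    have "Imp \<phi> r \<in> L" by (rule L_prop2[OF _ th(4) r(2)]) auto
    then have re: "r \<in> set es" using es r(1) by simp
    have ce: "Imp (conj es) r \<in> L" by (rule L_taut) (use re in auto)
    show ?thesis by (rule L_prop3[OF _ ce r(3) th(3)]) auto
  qed
  show "\<exists>Ap Ep. p \<notin> vars Ap \<and> vars Ap \<subseteq> vars \<phi> \<and> p \<notin> vars Ep \<and> vars Ep \<subseteq> vars \<phi> \<and>
      Imp Ap \<phi> \<in> L \<and> (\<forall>\<psi>. p \<notin> vars \<psi> \<longrightarrow> Imp \<psi> \<phi> \<in> L \<longrightarrow> Imp \<psi> Ap \<in> L) \<and>
      Imp \<phi> Ep \<in> L \<and> (\<forall>\<psi>. p \<notin> vars \<psi> \<longrightarrow> Imp \<phi> \<psi> \<in> L \<longrightarrow> Imp Ep \<psi> \<in> L)"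
    apply (rule exI[of _ "disj as"], rule exI[of _ "conj es"])
    using vA vE A1 A2 E1 E2 by blast
qed

end

lemma clogic_CKCEM: "clogic (axCM \<union> axCC \<union> axCN \<union> axCEM) False"
  by unfold_locales simp
lemma clogic_CKCEMID: "clogic (axCM \<union> axCC \<union> axCN \<union> axCEM \<union> axID) True"
  by unfold_locales simp

theorem mainTheorem9:
  shows "UIP CKCEM \<and> UIP CKCEMID \<and> CIP CKCEM \<and> CIP CKCEMID"
  unfolding CKCEM_def CKCEMID_def
  using clogic.UIP_L[OF clogic_CKCEM] clogic.UIP_L[OF clogic_CKCEMID]
    clogic.CIP_L[OF clogic_CKCEM] clogic.CIP_L[OF clogic_CKCEMID]
  by blast

end
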